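(* Let $\Omega\subset\mathbb{R}^d$ be open and connected, $\mathcal{I}=(0,T)$, and let $\mathbf{f}:\mathbb{R}\to\mathbb{R}^d$ be a smooth flux. Let $\phi:\Omega\times\mathcal{I}\to\mathbb{R}$ be a smooth solution of $\partial_t\phi+\nabla\cdot\mathbf{f}(\phi)=0$, and let $\eta:\mathbb{R}^d\to\mathbb{R}$ be a twice differentiable convex function, evaluated at $\nabla\phi$, i.e. $\eta=\eta(\nabla\phi)$. Then $$\partial_t\eta+\nabla\cdot\mathbf{q}=\mathscr{A},$$ where $$\mathbf{q}=\Big(\frac{\partial\eta}{\partial\nabla\phi}\cdot\nabla\phi\Big)\frac{\partial\mathbf{f}}{\partial\phi},\qquad \mathscr{A}=\big(\mathbf{H}_{\nabla\phi}\eta\,\nabla\phi\big)\cdot\Big(\mathbf{H}_{\mathbf{x}}\phi\,\frac{\partial\mathbf{f}}{\partial\phi}\Big).$$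
   Context: $\frac{\partial\eta}{\partial\nabla\phi}\in\mathbb{R}^d$ denotes the gradient of $\eta$ with respect to its (vector) argument, evaluated at $\nabla\phi$; $\frac{\partial\mathbf{f}}{\partial\phi}=\mathbf{f}'(\phi)\in\mathbb{R}^d$. $(\mathbf{H}_{\mathbf{x}}\phi)_{mn}=\partial^2\phi/\partial x_m\partial x_n$ is the spatial Hessian of $\phi$ and $(\mathbf{H}_{\nabla\phi}\eta)_{mn}=\partial^2\eta/\partial(\nabla_m\phi)\partial(\nabla_n\phi)$ is the Hessian of $\eta$ with respect to its argument, evaluated at $\nabla\phi$. *)

theory Defs
  imports "HOL-Analysis.Analysis"
begin

fun pderivs :: "'a::euclidean_space list \<Rightarrow> ('a \<Rightarrow> real) \<Rightarrow> ('a \<Rightarrow> real)" where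
  "pderivs [] g = g"
| "pderivs (v # vs) g = (\<lambda>x. frechet_derivative (pderivs vs g) (at x) v)"

definition smooth_on :: "'a::euclidean_space set \<Rightarrow> ('a \<Rightarrow> real) \<Rightarrow> bool" where
  "smooth_on S g \<longleftrightarrow> (\<forall>vs. set vs \<subseteq> Basis \<longrightarrow> pderivs vs g differentiable_on S)"

definition pd_x :: "'n::finite \<Rightarrow> ((real^'n) \<times> real \<Rightarrow> real) \<Rightarrow> (real^'n) \<times> real \<Rightarrow> real" where
  "pd_x i g p = frechet_derivative g (at p) (axis i 1, 0)"

definition pd_t :: "((real^'n::finite) \<times> real \<Rightarrow> real) \<Rightarrow> (real^'n) \<times> real \<Rightarrow> real" where
  "pd_t g p = frechet_derivative g (at p) (0, 1)"

definition grad_x :: "((real^'n::finite) \<times> real \<Rightarrow> real) \<Rightarrow> (real^'n) \<times> real \<Rightarrow> real^'n" where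
  "grad_x g p = (\<chi> i. pd_x i g p)"

definition hess_x :: "((real^'n::finite) \<times> real \<Rightarrow> real) \<Rightarrow> (real^'n) \<times> real \<Rightarrow> real^'n^'n" where
  "hess_x g p = (\<chi> m n. pd_x n (pd_x m g) p)"

definition div_x :: "((real^'n::finite) \<times> real \<Rightarrow> real^'n) \<Rightarrow> (real^'n) \<times> real \<Rightarrow> real" where
  "div_x Q p = (\<Sum>i\<in>UNIV. pd_x i (\<lambda>q. Q q $ i) p)"

definition grad_v :: "(real^'n::finite \<Rightarrow> real) \<Rightarrow> real^'n \<Rightarrow> real^'n" where
  "grad_v e v = (\<chi> i. frechet_derivative e (at v) (axis i 1))"

definition hess_v :: "(real^'n::finite \<Rightarrow> real) \<Rightarrow> real^'n \<Rightarrow> real^'n^'n" where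
  "hess_v e v = (\<chi> m n. frechet_derivative (\<lambda>w. grad_v e w $ m) (at v) (axis n 1))"

definition flux_deriv :: "(real \<Rightarrow> real^'n::finite) \<Rightarrow> real \<Rightarrow> real^'n" where
  "flux_deriv f s = frechet_derivative f (at s) 1"

end

theory Submission
  imports Defs
begin


lemma deriv_line:
  fixes g :: "'a::real_normed_vector \<Rightarrow> real"
  assumes "g differentiable (at (c + s *\<^sub>R v))"
  shows "((\<lambda>s. g (c + s *\<^sub>R v)) has_real_derivative frechet_derivative g (at (c + s *\<^sub>R v)) v) (at s)"
proof -
  let ?D = "frechet_derivative g (at (c + s *\<^sub>R v))"
  have g: "(g has_derivative ?D) (at (c + s *\<^sub>R v))" using assms frechet_derivative_works by blast
  have l: "((\<lambda>s. c + s *\<^sub>R v) has_derivative (\<lambda>t. t *\<^sub>R v)) (at s)"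
    by (auto intro!: derivative_eq_intros)
  have "((\<lambda>s. g (c + s *\<^sub>R v)) has_derivative (\<lambda>t. ?D (t *\<^sub>R v))) (at s)"
    using has_derivative_compose[OF l g] by simp
  moreover have "linear ?D" using g has_derivative_linear by blast
  hence "(\<lambda>t. ?D (t *\<^sub>R v)) = (\<lambda>t. ?D v * t)" by (auto simp: linear_scale)
  ultimately show ?thesis by (simp add: has_field_derivative_def)
qed

lemma schwarz_aux:
  fixes g :: "'a::real_normed_vector \<Rightarrow> real"
  assumes S: "open S" "a \<in> S" and dg: "\<And>x. x \<in> S \<Longrightarrow> g differentiable (at x)"
    and dv: "((\<lambda>x. frechet_derivative g (at x) v) has_derivative Lv) (at a)" and e: "e > 0"
  shows "\<exists>d>0. \<forall>h. 0 < h \<and> h < d \<longrightarrow>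
     \<bar>g (a + h *\<^sub>R u + h *\<^sub>R v) - g (a + h *\<^sub>R u) - g (a + h *\<^sub>R v) + g a - h^2 * Lv u\<bar>
       \<le> e * h^2 * (norm u + 2 * norm v)"
proof -
  let ?G = "\<lambda>x. frechet_derivative g (at x) v"
  obtain r where r: "r > 0" "ball a r \<subseteq> S" using S open_contains_ball by blast
  have blLv: "bounded_linear Lv" and "\<forall>e>0. \<exists>d>0. \<forall>y. norm(y - a) < d \<longrightarrow> norm (?G y - ?G a - Lv(y - a)) \<le> e * norm (y - a)"
    using dv unfolding has_derivative_at_alt by auto
  then obtain d1 where d1: "d1 > 0" "\<And>y. norm(y - a) < d1 \<Longrightarrow> \<bar>?G y - ?G a - Lv(y - a)\<bar> \<le> e * norm (y - a)"
    using e by force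
  have linLv: "linear Lv" using blLv bounded_linear.linear by blast
  define d where "d = min r d1 / (norm u + norm v + 1)"
  have np: "0 < norm u + norm v + 1" by (smt (verit) norm_ge_zero)
  have dpos: "d > 0" unfolding d_def using r d1 np by simp
  show ?thesis
  proof (intro exI[of _ d] conjI allI impI dpos)
    fix h :: real assume h: "0 < h \<and> h < d"
    have hb: "h * (norm u + norm v) < min r d1"
    proof -
      have "h * (norm u + norm v) \<le> h * (norm u + norm v + 1)" using h by simp
      also have "\<dots> < d * (norm u + norm v + 1)" using h using np by (intro mult_strict_right_mono) auto
      also have "\<dots> = min r d1" unfolding d_def using np by simp
      finally show ?thesis .
    qed
    have n1: "norm (h *\<^sub>R u + s *\<^sub>R v) < min r d1" if "0 \<le> s" "s \<le> h" for s
    proof -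
      have "norm (h *\<^sub>R u + s *\<^sub>R v) \<le> h * norm u + s * norm v"
        using norm_triangle_ineq[of "h *\<^sub>R u" "s *\<^sub>R v"] h that by simp
      also have "\<dots> \<le> h * (norm u + norm v)" using that by (simp add: algebra_simps mult_right_mono)
      finally show ?thesis using hb by linarith
    qed
    have n2: "norm (s *\<^sub>R v) < min r d1" if "0 \<le> s" "s \<le> h" for s
    proof -
      have "norm (s *\<^sub>R v) \<le> h * (norm u + norm v)" using that h
        by (simp add: mult_mono algebra_simps add_increasing)
      thus ?thesis using hb by linarith
    qed
    define \<psi> where "\<psi> s = g (a + h *\<^sub>R u + s *\<^sub>R v) - g (a + s *\<^sub>R v)" for s
    have der: "(\<psi> has_real_derivative (?G (a + h *\<^sub>R u + s *\<^sub>R v) - ?G (a + s *\<^sub>R v))) (at s)"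
      if "0 \<le> s" "s \<le> h" for s
    proof -
      have "a + h *\<^sub>R u + s *\<^sub>R v \<in> ball a r" using n1[OF that] norm_minus_cancel[of "h *\<^sub>R u + s *\<^sub>R v"]
        by (simp add: dist_norm add.assoc)
      hence i1: "a + h *\<^sub>R u + s *\<^sub>R v \<in> S" using r by blast
      have "a + s *\<^sub>R v \<in> ball a r" using n2[OF that] by (simp add: dist_norm)
      hence i2: "a + s *\<^sub>R v \<in> S" using r by blast
      show ?thesis unfolding \<psi>_def
        by (intro DERIV_diff deriv_line dg i1 i2)
    qed
    obtain \<xi> where \<xi>: "0 < \<xi>" "\<xi> < h" "\<psi> h - \<psi> 0 = (h - 0) * (?G (a + h *\<^sub>R u + \<xi> *\<^sub>R v) - ?G (a + \<xi> *\<^sub>R v))"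
      using MVT2[of 0 h \<psi> "\<lambda>s. ?G (a + h *\<^sub>R u + s *\<^sub>R v) - ?G (a + s *\<^sub>R v)"] der h by auto
    have b1: "\<bar>?G (a + h *\<^sub>R u + \<xi> *\<^sub>R v) - ?G a - Lv (h *\<^sub>R u + \<xi> *\<^sub>R v)\<bar> \<le> e * (h * (norm u + norm v))"
    proof -
      have "\<bar>?G (a + h *\<^sub>R u + \<xi> *\<^sub>R v) - ?G a - Lv (h *\<^sub>R u + \<xi> *\<^sub>R v)\<bar> \<le> e * norm (h *\<^sub>R u + \<xi> *\<^sub>R v)"
        using d1(2)[of "a + h *\<^sub>R u + \<xi> *\<^sub>R v"] n1[of \<xi>] \<xi> by (simp add: add.assoc)
      also have "norm (h *\<^sub>R u + \<xi> *\<^sub>R v) \<le> h * (norm u + norm v)"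
        using norm_triangle_ineq[of "h *\<^sub>R u" "\<xi> *\<^sub>R v"] h \<xi>
        by (simp add: algebra_simps) (smt (verit) mult_right_mono norm_ge_zero)
      finally show ?thesis using e by simp
    qed
    have b2: "\<bar>?G (a + \<xi> *\<^sub>R v) - ?G a - Lv (\<xi> *\<^sub>R v)\<bar> \<le> e * (h * norm v)"
    proof -
      have "\<bar>?G (a + \<xi> *\<^sub>R v) - ?G a - Lv (\<xi> *\<^sub>R v)\<bar> \<le> e * norm (\<xi> *\<^sub>R v)"
        using d1(2)[of "a + \<xi> *\<^sub>R v"] n2[of \<xi>] \<xi> by simp
      also have "norm (\<xi> *\<^sub>R v) \<le> h * norm v" using \<xi> by (simp add: mult_right_mono)
      finally show ?thesis using e by simp
    qed
    have lin: "Lv (h *\<^sub>R u + \<xi> *\<^sub>R v) = h * Lv u + Lv (\<xi> *\<^sub>R v)"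
      using linLv by (simp add: linear_add linear_scale)
    have b3: "\<bar>?G (a + h *\<^sub>R u + \<xi> *\<^sub>R v) - ?G (a + \<xi> *\<^sub>R v) - h * Lv u\<bar> \<le> e * h * (norm u + 2 * norm v)"
      using b1 b2 lin by (simp add: algebra_simps)
    have eq: "g (a + h *\<^sub>R u + h *\<^sub>R v) - g (a + h *\<^sub>R u) - g (a + h *\<^sub>R v) + g a - h^2 * Lv u
       = h * (?G (a + h *\<^sub>R u + \<xi> *\<^sub>R v) - ?G (a + \<xi> *\<^sub>R v) - h * Lv u)"
      using \<xi>(3) unfolding \<psi>_def by (simp add: algebra_simps power2_eq_square)
    have "\<bar>h * (?G (a + h *\<^sub>R u + \<xi> *\<^sub>R v) - ?G (a + \<xi> *\<^sub>R v) - h * Lv u)\<bar> \<le> h * (e * h * (norm u + 2 * norm v))"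
      using b3 h by (simp add: abs_mult mult_left_mono)
    thus "\<bar>g (a + h *\<^sub>R u + h *\<^sub>R v) - g (a + h *\<^sub>R u) - g (a + h *\<^sub>R v) + g a - h^2 * Lv u\<bar>
       \<le> e * h^2 * (norm u + 2 * norm v)" unfolding eq by (simp add: power2_eq_square algebra_simps)
  qed
qed

lemma schwarz:
  fixes g :: "'a::real_normed_vector \<Rightarrow> real"
  assumes S: "open S" "a \<in> S" and dg: "\<And>x. x \<in> S \<Longrightarrow> g differentiable (at x)"
    and du: "((\<lambda>x. frechet_derivative g (at x) u) has_derivative Lu) (at a)"
    and dv: "((\<lambda>x. frechet_derivative g (at x) v) has_derivative Lv) (at a)"
  shows "Lu v = Lv u"
proof (rule ccontr)
  assume ne: "Lu v \<noteq> Lv u"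
  define c where "c = \<bar>Lu v - Lv u\<bar>"
  have c: "c > 0" using ne unfolding c_def by simp
  define e where "e = c / (4 * (norm u + norm v + 1))"
  have np: "0 < norm u + norm v + 1" by (smt (verit) norm_ge_zero)
  have e: "e > 0" unfolding e_def using c np by simp
  obtain d1 where d1: "d1 > 0" "\<forall>h. 0 < h \<and> h < d1 \<longrightarrow>
     \<bar>g (a + h *\<^sub>R u + h *\<^sub>R v) - g (a + h *\<^sub>R u) - g (a + h *\<^sub>R v) + g a - h^2 * Lv u\<bar>
       \<le> e * h^2 * (norm u + 2 * norm v)"
    using schwarz_aux[OF S dg dv e, of u] by blast
  obtain d2 where d2: "d2 > 0" "\<forall>h. 0 < h \<and> h < d2 \<longrightarrow>
     \<bar>g (a + h *\<^sub>R v + h *\<^sub>R u) - g (a + h *\<^sub>R v) - g (a + h *\<^sub>R u) + g a - h^2 * Lu v\<bar>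
       \<le> e * h^2 * (norm v + 2 * norm u)"
    using schwarz_aux[OF S dg du e, of v] by blast
  define h where "h = min d1 d2 / 2"
  have h: "0 < h" "h < d1" "h < d2" unfolding h_def using d1 d2 by auto
  have A: "\<bar>g (a + h *\<^sub>R u + h *\<^sub>R v) - g (a + h *\<^sub>R u) - g (a + h *\<^sub>R v) + g a - h^2 * Lv u\<bar>
       \<le> e * h^2 * (norm u + 2 * norm v)" using d1 h by blast
  have B: "\<bar>g (a + h *\<^sub>R u + h *\<^sub>R v) - g (a + h *\<^sub>R u) - g (a + h *\<^sub>R v) + g a - h^2 * Lu v\<bar>
       \<le> e * h^2 * (norm v + 2 * norm u)"
  proof -
    have "\<bar>g (a + h *\<^sub>R v + h *\<^sub>R u) - g (a + h *\<^sub>R v) - g (a + h *\<^sub>R u) + g a - h^2 * Lu v\<bar>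
       \<le> e * h^2 * (norm v + 2 * norm u)" using d2 h by blast
    moreover have "a + h *\<^sub>R v + h *\<^sub>R u = a + h *\<^sub>R u + h *\<^sub>R v" by (simp add: algebra_simps)
    ultimately show ?thesis by (simp add: algebra_simps)
  qed
  define X where "X = g (a + h *\<^sub>R u + h *\<^sub>R v) - g (a + h *\<^sub>R u) - g (a + h *\<^sub>R v) + g a"
  have "h^2 * c = \<bar>h^2 * (Lu v - Lv u)\<bar>" unfolding c_def
    by (simp add: abs_mult)
  also have "\<dots> = \<bar>(X - h^2 * Lv u) - (X - h^2 * Lu v)\<bar>" by (simp add: algebra_simps)
  also have "\<dots> \<le> \<bar>X - h^2 * Lv u\<bar> + \<bar>X - h^2 * Lu v\<bar>" by (rule abs_triangle_ineq4)
  also have "\<dots> \<le> e * h^2 * (norm u + 2 * norm v) + e * h^2 * (norm v + 2 * norm u)"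
    using A B unfolding X_def by linarith
  also have "\<dots> = h^2 * (e * (3 * (norm u + norm v)))" by (simp add: algebra_simps)
  also have "\<dots> < h^2 * c"
  proof -
    have "e * (3 * (norm u + norm v)) < e * (4 * (norm u + norm v + 1))" 
    proof (rule mult_strict_left_mono[OF _ e])
      show "3 * (norm u + norm v) < 4 * (norm u + norm v + 1)" by (smt (verit) norm_ge_zero)
    qed
    also have "\<dots> = c" unfolding e_def using np by simp
    finally show ?thesis using h by simp
  qed
  finally show False by simp
qed



lemma final_alg:
  fixes gv U F G Ft :: "real^'n::finite" and H P :: "real^'n^'n"
  assumes H: "\<And>i j. H$i$j = H$j$i" and P: "\<And>i j. P$i$j = P$j$i"
    and Ft: "\<And>i. Ft$i = - (\<Sum>j\<in>UNIV. F$j * P$j$i + G$j * U$i * U$j)"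
  shows "gv \<bullet> Ft + (\<Sum>j\<in>UNIV. ((gv \<bullet> (\<chi> k. P$k$j) + (H *v (\<chi> k. P$k$j)) \<bullet> U) * F$j
            + (gv \<bullet> U) * G$j * U$j))
       = (H *v U) \<bullet> (P *v F)"
proof -
  have L1: "gv \<bullet> Ft = - (\<Sum>i\<in>UNIV. \<Sum>j\<in>UNIV. gv$i * F$j * P$j$i) - (\<Sum>i\<in>UNIV. \<Sum>j\<in>UNIV. gv$i * G$j * U$i * U$j)"
    by (simp add: inner_vec_def Ft sum_distrib_left sum_negf sum.distrib sum_subtractf algebra_simps)
  have L2: "(\<Sum>j\<in>UNIV. ((gv \<bullet> (\<chi> k. P$k$j) + (H *v (\<chi> k. P$k$j)) \<bullet> U) * F$j
            + (gv \<bullet> U) * G$j * U$j))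
     = (\<Sum>j\<in>UNIV. \<Sum>k\<in>UNIV. gv$k * P$k$j * F$j) + (\<Sum>j\<in>UNIV. \<Sum>m\<in>UNIV. \<Sum>k\<in>UNIV. H$m$k * P$k$j * U$m * F$j)
       + (\<Sum>j\<in>UNIV. \<Sum>i\<in>UNIV. gv$i * U$i * G$j * U$j)"
    by (simp add: inner_vec_def matrix_vector_mult_def sum.distrib sum_distrib_left sum_distrib_right algebra_simps)
  have R: "(H *v U) \<bullet> (P *v F) = (\<Sum>m\<in>UNIV. \<Sum>n\<in>UNIV. \<Sum>k\<in>UNIV. H$m$n * U$n * P$m$k * F$k)"
    by (simp add: inner_vec_def matrix_vector_mult_def sum_distrib_left sum_distrib_right algebra_simps)
  have a: "(\<Sum>i\<in>UNIV. \<Sum>j\<in>UNIV. gv$i * F$j * P$j$i) = (\<Sum>j\<in>UNIV. \<Sum>k\<in>UNIV. gv$k * P$k$j * F$j)"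
    by (subst sum.swap) (simp add: P algebra_simps)
  have b: "(\<Sum>i\<in>UNIV. \<Sum>j\<in>UNIV. gv$i * G$j * U$i * U$j) = (\<Sum>j\<in>UNIV. \<Sum>i\<in>UNIV. gv$i * U$i * G$j * U$j)"
    by (subst sum.swap) (simp add: algebra_simps)
  have c: "(\<Sum>j\<in>UNIV. \<Sum>m\<in>UNIV. \<Sum>k\<in>UNIV. H$m$k * P$k$j * U$m * F$j)
        = (\<Sum>m\<in>UNIV. \<Sum>n\<in>UNIV. \<Sum>k\<in>UNIV. H$m$n * U$n * P$m$k * F$k)"
  proof -
    have "(\<Sum>j\<in>UNIV. \<Sum>m\<in>UNIV. \<Sum>k\<in>UNIV. H$m$k * P$k$j * U$m * F$j)
        = (\<Sum>m\<in>UNIV. \<Sum>j\<in>UNIV. \<Sum>k\<in>UNIV. H$m$k * P$k$j * U$m * F$j)" by (rule sum.swap)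
    also have "\<dots> = (\<Sum>m\<in>UNIV. \<Sum>k\<in>UNIV. \<Sum>j\<in>UNIV. H$m$k * P$k$j * U$m * F$j)"
      by (rule sum.cong[OF refl], rule sum.swap)
    also have "\<dots> = (\<Sum>k\<in>UNIV. \<Sum>m\<in>UNIV. \<Sum>j\<in>UNIV. H$m$k * P$k$j * U$m * F$j)" by (rule sum.swap)
    also have "\<dots> = (\<Sum>m\<in>UNIV. \<Sum>n\<in>UNIV. \<Sum>k\<in>UNIV. H$m$n * U$n * P$m$k * F$k)"
      by (simp add: H algebra_simps)
    finally show ?thesis .
  qed
  show ?thesis unfolding L1 L2 R a b c by simp
qed



lemma fd_eval: "(g has_derivative g') (at q) \<Longrightarrow> frechet_derivative g (at q) w = g' w"
  by (drule frechet_derivative_at) simp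

lemma fd_has: "g differentiable (at q) \<Longrightarrow> (g has_derivative frechet_derivative g (at q)) (at q)"
  using frechet_derivative_works by blast

lemma fd_linear: "g differentiable (at q) \<Longrightarrow> linear (frechet_derivative g (at q))"
  using fd_has has_derivative_linear by blast

lemma real_lin:
  fixes g :: "real \<Rightarrow> real"
  assumes "g differentiable (at s)"
  shows "frechet_derivative g (at s) x = x * frechet_derivative g (at s) 1"
proof -
  have "linear (frechet_derivative g (at s))" using fd_linear[OF assms] .
  then have "frechet_derivative g (at s) (x *\<^sub>R 1) = x *\<^sub>R frechet_derivative g (at s) 1"
    by (rule linear_scale)
  thus ?thesis by simp
qed

lemma chain_real:
  fixes h :: "real \<Rightarrow> real" and g :: "'a::real_normed_vector \<Rightarrow> real"
  assumes "h differentiable (at (g q))" "g differentiable (at q)"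
  shows "((\<lambda>q. h (g q)) has_derivative
           (\<lambda>w. frechet_derivative h (at (g q)) 1 * frechet_derivative g (at q) w)) (at q)"
proof -
  have "((\<lambda>q. h (g q)) has_derivative
           (\<lambda>w. frechet_derivative h (at (g q)) (frechet_derivative g (at q) w))) (at q)"
    using has_derivative_compose[OF fd_has[OF assms(2)] fd_has[OF assms(1)]] by simp
  moreover have "(\<lambda>w. frechet_derivative h (at (g q)) (frechet_derivative g (at q) w))
     = (\<lambda>w. frechet_derivative h (at (g q)) 1 * frechet_derivative g (at q) w)"
  proof
    fix w show "frechet_derivative h (at (g q)) (frechet_derivative g (at q) w)
     = frechet_derivative h (at (g q)) 1 * frechet_derivative g (at q) w"
      by (subst real_lin[OF assms(1)]) (rule mult.commute)
  qed
  ultimately show ?thesis by simp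
qed

lemma vec_has_deriv:
  fixes f :: "'a::real_normed_vector \<Rightarrow> real^'n::finite"
  assumes "\<And>i. ((\<lambda>x. f x $ i) has_derivative (\<lambda>h. f' h $ i)) (at q)"
  shows "(f has_derivative f') (at q)"
proof -
  have "\<forall>b\<in>Basis. ((\<lambda>x. f x \<bullet> b) has_derivative (\<lambda>x. f' x \<bullet> b)) (at q within UNIV)"
    using assms by (auto simp: Basis_vec_def inner_axis)
  thus ?thesis using has_derivative_componentwise_within[of f f' q UNIV] by simp
qed

lemma vec_nth_deriv:
  "(f has_derivative f') F \<Longrightarrow> ((\<lambda>x. f x $ i) has_derivative (\<lambda>h. f' h $ i)) F"
  by (rule bounded_linear.has_derivative[OF bounded_linear_vec_nth])

lemma lin_vec:
  fixes L :: "real^'n::finite \<Rightarrow> 'b::real_vector"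
  assumes "linear L"
  shows "L z = (\<Sum>i\<in>UNIV. z$i *\<^sub>R L (axis i 1))"
proof -
  have "L z = L (\<Sum>i\<in>UNIV. z$i *\<^sub>R axis i 1)"
    using basis_expansion[of z] by (simp add: scalar_mult_eq_scaleR)
  also have "\<dots> = (\<Sum>i\<in>UNIV. z$i *\<^sub>R L (axis i 1))"
    using assms by (simp add: linear_sum linear_scale)
  finally show ?thesis .
qed

lemma grad_v_inner:
  assumes "\<eta> differentiable (at y)"
  shows "frechet_derivative \<eta> (at y) z = grad_v \<eta> y \<bullet> z"
  using lin_vec[OF fd_linear[OF assms], of z]
  by (simp add: grad_v_def inner_vec_def mult.commute)

lemma hess_v_mult:
  fixes \<eta> :: "real^'n::finite \<Rightarrow> real"
  assumes "grad_v \<eta> differentiable (at y)"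
  shows "frechet_derivative (grad_v \<eta>) (at y) z = hess_v \<eta> y *v z"
proof -
  have D: "(grad_v \<eta> has_derivative frechet_derivative (grad_v \<eta>) (at y)) (at y)"
    using fd_has[OF assms] .
  have "frechet_derivative (grad_v \<eta>) (at y) z $ m = (hess_v \<eta> y *v z) $ m" for m
  proof -
    have Dm: "((\<lambda>w. grad_v \<eta> w $ m) has_derivative (\<lambda>h. frechet_derivative (grad_v \<eta>) (at y) h $ m)) (at y)"
      using vec_nth_deriv[OF D] .
    have lin: "linear (\<lambda>h. frechet_derivative (grad_v \<eta>) (at y) h $ m)"
      using Dm has_derivative_linear by blast
    have "frechet_derivative (grad_v \<eta>) (at y) z $ m
        = (\<Sum>n\<in>UNIV. z$n * frechet_derivative (grad_v \<eta>) (at y) (axis n 1) $ m)"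
      using lin_vec[OF lin, of z] by simp
    also have "\<dots> = (\<Sum>n\<in>UNIV. z$n * frechet_derivative (\<lambda>w. grad_v \<eta> w $ m) (at y) (axis n 1))"
      using fd_eval[OF Dm] by simp
    also have "\<dots> = (hess_v \<eta> y *v z) $ m"
      by (simp add: hess_v_def matrix_vector_mult_def mult.commute)
    finally show ?thesis .
  qed
  thus ?thesis by (simp add: vec_eq_iff)
qed



theorem lemma1:
  fixes \<Omega> :: "(real^'n::finite) set"
    and T :: real
    and f :: "real \<Rightarrow> real^'n"
    and \<phi> :: "(real^'n) \<times> real \<Rightarrow> real"
    and \<eta> :: "real^'n \<Rightarrow> real"
  assumes "open \<Omega>" and "connected \<Omega>" and "T > 0"
    and "\<forall>i. smooth_on UNIV (\<lambda>s. f s $ i)"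
    and "smooth_on (\<Omega> \<times> {0<..<T}) \<phi>"
    and "\<forall>p \<in> \<Omega> \<times> {0<..<T}. pd_t \<phi> p + div_x (\<lambda>q. f (\<phi> q)) p = 0"
    and "\<forall>v. \<eta> differentiable (at v)"
    and "\<forall>v. grad_v \<eta> differentiable (at v)"
    and "convex_on UNIV \<eta>"
  shows "\<forall>p \<in> \<Omega> \<times> {0<..<T}.
           pd_t (\<lambda>q. \<eta> (grad_x \<phi> q)) p
           + div_x (\<lambda>q. (grad_v \<eta> (grad_x \<phi> q) \<bullet> grad_x \<phi> q) *\<^sub>R flux_deriv f (\<phi> q)) p
         = (hess_v \<eta> (grad_x \<phi> p) *v grad_x \<phi> p) \<bullet> (hess_x \<phi> p *v flux_deriv f (\<phi> p))"
proof (intro ballI)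
  fix p assume pS0: "p \<in> \<Omega> \<times> {0<..<T}"
  define S where "S = \<Omega> \<times> {0<..<T}"
  have pS: "p \<in> S" using pS0 S_def by simp
  have oS: "open S" using assms(1) by (simp add: S_def open_Times)
  have sm: "pderivs vs \<phi> differentiable (at q)" if "set vs \<subseteq> Basis" "q \<in> S" for vs q
    using assms(5) that oS unfolding smooth_on_def S_def[symmetric] differentiable_on_def
    by (metis at_within_open)
  define ex where "ex i = (axis i (1::real), 0::real)" for i :: 'n
  define et where "et = (0::real^'n, 1::real)"
  have exB: "ex i \<in> Basis" for i
    unfolding ex_def Basis_prod_def Basis_vec_def by auto
  have etB: "et \<in> Basis" unfolding et_def Basis_prod_def by auto
  have pdx_eq: "pd_x i g = pderivs [ex i] g" for i g
    by (simp add: fun_eq_iff pd_x_def ex_def)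
  have pdt_eq: "pd_t g = pderivs [et] g" for g
    by (simp add: fun_eq_iff pd_t_def et_def)
  have dphi: "\<phi> differentiable (at q)" if "q \<in> S" for q using sm[of "[]" q] that by simp
  have dphii: "pd_x i \<phi> differentiable (at q)" if "q \<in> S" for i q
    using sm[of "[ex i]" q] that exB by (simp add: pdx_eq)
  have dphit: "pd_t \<phi> differentiable (at q)" if "q \<in> S" for q
    using sm[of "[et]" q] that etB by (simp add: pdt_eq)
  define F where "F j s = frechet_derivative (\<lambda>s. f s $ j) (at s) 1" for j s
  define G where "G j s = frechet_derivative (F j) (at s) 1" for j s
  have df: "(\<lambda>s. f s $ j) differentiable (at s)" for j s
    using assms(4) unfolding smooth_on_def differentiable_on_def
    by (metis empty_subsetI list.set(1) pderivs.simps(1) UNIV_I)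
  have dF: "F j differentiable (at s)" for j s
  proof -
    have "pderivs [1] (\<lambda>s. f s $ j) differentiable (at s)"
      using assms(4) unfolding smooth_on_def differentiable_on_def
      by (metis UNIV_I Basis_real_def empty_set list.set(2) order_refl)
    thus ?thesis by (simp add: F_def[abs_def])
  qed
  have flux: "flux_deriv f s = (\<chi> j. F j s)" for s
  proof -
    have "(f has_derivative (\<lambda>h. \<chi> j. frechet_derivative (\<lambda>s. f s $ j) (at s) h)) (at s)"
      by (rule vec_has_deriv) (simp add: fd_has[OF df])
    thus ?thesis unfolding flux_deriv_def F_def by (simp add: fd_eval)
  qed
  have pde: "pd_t \<phi> q = - (\<Sum>j\<in>UNIV. F j (\<phi> q) * pd_x j \<phi> q)" if "q \<in> S" for q
  proof -
    have "pd_x j (\<lambda>q. f (\<phi> q) $ j) q = F j (\<phi> q) * pd_x j \<phi> q" for j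
      unfolding pd_x_def F_def
      by (rule fd_eval[OF chain_real[OF df[of j] dphi[OF that]]])
    hence "div_x (\<lambda>q. f (\<phi> q)) q = (\<Sum>j\<in>UNIV. F j (\<phi> q) * pd_x j \<phi> q)"
      by (simp add: div_x_def)
    moreover have "pd_t \<phi> q + div_x (\<lambda>q. f (\<phi> q)) q = 0" using assms(6) that unfolding S_def by blast
    ultimately show ?thesis by linarith
  qed
  have dui: "((\<lambda>x. frechet_derivative \<phi> (at x) (ex i)) has_derivative frechet_derivative (pd_x i \<phi>) (at p)) (at p)" for i
  proof -
    have "(\<lambda>x. frechet_derivative \<phi> (at x) (ex i)) = pd_x i \<phi>" by (simp add: fun_eq_iff pd_x_def ex_def)
    thus ?thesis using fd_has[OF dphii[OF pS]] by simp
  qed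
  have dut: "((\<lambda>x. frechet_derivative \<phi> (at x) et) has_derivative frechet_derivative (pd_t \<phi>) (at p)) (at p)"
  proof -
    have "(\<lambda>x. frechet_derivative \<phi> (at x) et) = pd_t \<phi>" by (simp add: fun_eq_iff pd_t_def et_def)
    thus ?thesis using fd_has[OF dphit[OF pS]] by simp
  qed
  have mixed: "pd_t (pd_x i \<phi>) p = pd_x i (pd_t \<phi>) p" for i
    using schwarz[OF oS pS dphi dui dut] by (simp add: pd_t_def pd_x_def ex_def et_def)
  have Psym: "hess_x \<phi> p $ i $ j = hess_x \<phi> p $ j $ i" for i j
    using schwarz[OF oS pS dphi dui dui] by (simp add: hess_x_def pd_x_def ex_def)
  define y where "y = grad_x \<phi> p"
  have Hsym: "hess_v \<eta> y $ m $ n = hess_v \<eta> y $ n $ m" for m n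
  proof -
    have "((\<lambda>x. frechet_derivative \<eta> (at x) (axis k 1)) has_derivative
            frechet_derivative (\<lambda>w. grad_v \<eta> w $ k) (at y)) (at y)" for k
    proof -
      have "(\<lambda>x. frechet_derivative \<eta> (at x) (axis k 1)) = (\<lambda>w. grad_v \<eta> w $ k)"
        by (simp add: fun_eq_iff grad_v_def)
      moreover have "(\<lambda>w. grad_v \<eta> w $ k) differentiable (at y)"
        using vec_nth_deriv[OF fd_has[OF assms(8)[rule_format, of y]]] differentiableI by blast
      ultimately show ?thesis using fd_has by metis
    qed
    from schwarz[OF open_UNIV UNIV_I _ this this] assms(7) show ?thesis
      by (simp add: hess_v_def)
  qed
  have Ft: "pd_x i (pd_t \<phi>) p = - (\<Sum>j\<in>UNIV. F j (\<phi> p) * hess_x \<phi> p $ j $ i + G j (\<phi> p) * y $ i * y $ j)" for i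
  proof -
    have e1: "frechet_derivative (pd_t \<phi>) (at p) = frechet_derivative (\<lambda>q. - (\<Sum>j\<in>UNIV. F j (\<phi> q) * pd_x j \<phi> q)) (at p)"
      by (rule frechet_derivative_transform_within_open[OF dphit[OF pS] oS pS pde])
    have "((\<lambda>q. - (\<Sum>j\<in>UNIV. F j (\<phi> q) * pd_x j \<phi> q)) has_derivative
       (\<lambda>w. - (\<Sum>j\<in>UNIV. F j (\<phi> p) * frechet_derivative (pd_x j \<phi>) (at p) w
          + G j (\<phi> p) * frechet_derivative \<phi> (at p) w * pd_x j \<phi> p))) (at p)"
      unfolding G_def
      by (intro has_derivative_minus has_derivative_sum has_derivative_mult chain_real dF dphi pS
            fd_has dphii)
    from fd_eval[OF this, of "ex i"] show ?thesis
      by (simp add: e1 pd_x_def[of i "pd_t \<phi>"] hess_x_def y_def grad_x_def) (simp add: pd_x_def ex_def)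
  qed
  show "pd_t (\<lambda>q. \<eta> (grad_x \<phi> q)) p
           + div_x (\<lambda>q. (grad_v \<eta> (grad_x \<phi> q) \<bullet> grad_x \<phi> q) *\<^sub>R flux_deriv f (\<phi> q)) p
         = (hess_v \<eta> (grad_x \<phi> p) *v grad_x \<phi> p) \<bullet> (hess_x \<phi> p *v flux_deriv f (\<phi> p))"
  proof -
    have dy: "(grad_x \<phi> has_derivative (\<lambda>w. \<chi> i. frechet_derivative (pd_x i \<phi>) (at p) w)) (at p)"
      by (rule vec_has_deriv) (simp add: grad_x_def fd_has[OF dphii[OF pS]])
    have deta: "(\<eta> has_derivative frechet_derivative \<eta> (at y)) (at (grad_x \<phi> p))"
      using fd_has[OF assms(7)[rule_format, of y]] y_def by simp
    have dgv: "(grad_v \<eta> has_derivative frechet_derivative (grad_v \<eta>) (at y)) (at (grad_x \<phi> p))"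
      using fd_has[OF assms(8)[rule_format, of y]] y_def by simp
    have T1: "pd_t (\<lambda>q. \<eta> (grad_x \<phi> q)) p = grad_v \<eta> y \<bullet> (\<chi> i. pd_t (pd_x i \<phi>) p)"
    proof -
      have "((\<lambda>q. \<eta> (grad_x \<phi> q)) has_derivative
          (\<lambda>w. frechet_derivative \<eta> (at y) (\<chi> i. frechet_derivative (pd_x i \<phi>) (at p) w))) (at p)"
        using has_derivative_compose[OF dy deta] by simp
      from fd_eval[OF this, of et] show ?thesis
        by (simp add: pd_t_def grad_v_inner[OF assms(7)[rule_format]] et_def)
    qed
    define Pc where "Pc j = (\<chi> k. hess_x \<phi> p $ k $ j)" for j
    have T2: "pd_x j (\<lambda>q. ((grad_v \<eta> (grad_x \<phi> q) \<bullet> grad_x \<phi> q) *\<^sub>R flux_deriv f (\<phi> q)) $ j) p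
       = (grad_v \<eta> y \<bullet> Pc j + (hess_v \<eta> y *v Pc j) \<bullet> y) * F j (\<phi> p) + (grad_v \<eta> y \<bullet> y) * G j (\<phi> p) * y $ j" for j
    proof -
      have fe: "(\<lambda>q. ((grad_v \<eta> (grad_x \<phi> q) \<bullet> grad_x \<phi> q) *\<^sub>R flux_deriv f (\<phi> q)) $ j)
          = (\<lambda>q. (grad_v \<eta> (grad_x \<phi> q) \<bullet> grad_x \<phi> q) * F j (\<phi> q))"
        by (simp add: flux)
      have "((\<lambda>q. (grad_v \<eta> (grad_x \<phi> q) \<bullet> grad_x \<phi> q) * F j (\<phi> q)) has_derivative
         (\<lambda>h. (grad_v \<eta> (grad_x \<phi> p) \<bullet> grad_x \<phi> p) * (G j (\<phi> p) * frechet_derivative \<phi> (at p) h)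
           + (grad_v \<eta> (grad_x \<phi> p) \<bullet> (\<chi> i. frechet_derivative (pd_x i \<phi>) (at p) h)
              + frechet_derivative (grad_v \<eta>) (at y) (\<chi> i. frechet_derivative (pd_x i \<phi>) (at p) h) \<bullet> grad_x \<phi> p)
             * F j (\<phi> p))) (at p)"
        unfolding G_def
        by (rule has_derivative_mult[OF has_derivative_inner[OF has_derivative_compose[OF dy dgv] dy]
              chain_real[OF dF dphi[OF pS]]])
      from fd_eval[OF this, of "ex j"] show ?thesis
        unfolding fe pd_x_def[of j]
        by (simp add: hess_v_mult[OF assms(8)[rule_format]] Pc_def hess_x_def y_def[symmetric])
          (simp add: pd_x_def ex_def grad_x_def y_def algebra_simps)
    qed
    have alg: "grad_v \<eta> y \<bullet> (\<chi> i. pd_t (pd_x i \<phi>) p)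
       + (\<Sum>j\<in>UNIV. ((grad_v \<eta> y \<bullet> (\<chi> k. hess_x \<phi> p $ k $ j) + (hess_v \<eta> y *v (\<chi> k. hess_x \<phi> p $ k $ j)) \<bullet> y)
             * (\<chi> j. F j (\<phi> p)) $ j + (grad_v \<eta> y \<bullet> y) * (\<chi> j. G j (\<phi> p)) $ j * y $ j))
       = (hess_v \<eta> y *v y) \<bullet> (hess_x \<phi> p *v (\<chi> j. F j (\<phi> p)))"
      by (rule final_alg[OF Hsym Psym]) (simp add: mixed Ft)
    show ?thesis
      unfolding T1 div_x_def unfolding T2 unfolding flux y_def[symmetric] using alg by (simp add: Pc_def)
  qed
qed

end
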